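(* Let $\{W_i\}_{i=1}^M$ be subspaces of $\mathbb{R}^N$ which do phase retrieval, and assume $\sum_{i=1}^M\dim(W_i)=2N-1$. Then $W_i\cap W_j=\{0\}$ for all $i\neq j$.
   Context: A family of subspaces $\{W_i\}_{i=1}^M$ of $\mathbb{R}^N$ with orthogonal projections $\{P_i\}_{i=1}^M$ does phase retrieval if for all $x,y\in\mathbb{R}^N$, $\|P_ix\|=\|P_iy\|$ for all $i$ implies $x=\pm y$. *)

theory Defs
  imports "HOL-Analysis.Analysis"
begin

definition orth_proj :: "'a::euclidean_space set \<Rightarrow> 'a \<Rightarrow> 'a" where
  "orth_proj W x = (THE p. p \<in> W \<and> (\<forall>w\<in>W. (x - p) \<bullet> w = 0))"

definition does_phase_retrieval :: "nat \<Rightarrow> (nat \<Rightarrow> 'a::euclidean_space set) \<Rightarrow> bool" where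
  "does_phase_retrieval M W \<longleftrightarrow>
     (\<forall>x y. (\<forall>i\<in>{1..M}. norm (orth_proj (W i) x) = norm (orth_proj (W i) y))
            \<longrightarrow> x = y \<or> x = - y)"

end

theory Submission imports Defs begin

lemma obasis:
  fixes W :: "'a::euclidean_space set"
  assumes "subspace W" "w \<in> W" "w \<noteq> 0"
  shows "\<exists>B. finite B \<and> 0 \<notin> B \<and> pairwise orthogonal B \<and> span B = W \<and> card B = dim W \<and> w \<in> B"
proof -
  have po: "pairwise orthogonal {w}" by (simp add: pairwise_def)
  obtain U where U: "U \<inter> (insert 0 {w}) = {}" "pairwise orthogonal ({w} \<union> U)"
                  "span ({w} \<union> U) = span ({w} \<union> W)"
    using orthogonal_extension_strong[OF po] by blast
  let ?B = "insert w U"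
  have sp: "span ?B = W" using U(3) assms
    
  proof -
    have "{w} \<union> W = W" using assms by auto
    then have "span ({w} \<union> W) = W" using assms(1) by (simp add: span_eq_iff)
    then show ?thesis using U(3) by simp
  qed
  have z: "0 \<notin> ?B" using U(1) assms(3) by auto
  have po2: "pairwise orthogonal ?B" using U(2) by simp
  have ind: "independent ?B" using pairwise_orthogonal_independent[OF po2 z] .
  have fin: "finite ?B" using ind by (rule independent_imp_finite)
  have "card ?B = dim W" using dim_eq_card_independent[OF ind] sp by (metis dim_span)
  then show ?thesis using sp z po2 fin by blast
qed

lemma obasis2:
  fixes W :: "'a::euclidean_space set"
  assumes "subspace W"
  shows "\<exists>B. finite B \<and> 0 \<notin> B \<and> pairwise orthogonal B \<and> span B = W \<and> card B = dim W"
proof -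
  obtain B where "0 \<notin> B" "B \<subseteq> W" "pairwise orthogonal B" "independent B"
                  "card B = dim W" "span B = W"
    using orthogonal_basis_subspace[OF assms] by blast
  then show ?thesis using independent_imp_finite by blast
qed

lemma proj_formula:
  fixes W :: "'a::euclidean_space set"
  assumes fin: "finite B" and z: "0 \<notin> B" and po: "pairwise orthogonal B" and sp: "span B = W"
  shows "orth_proj W x = (\<Sum>e\<in>B. (x \<bullet> e / (e \<bullet> e)) *\<^sub>R e) \<and> orth_proj W x \<in> W \<and> (\<forall>w\<in>W. (x - orth_proj W x) \<bullet> w = 0)"
proof -
  define p where "p = (\<Sum>e\<in>B. (x \<bullet> e / (e \<bullet> e)) *\<^sub>R e)"
  have pW: "p \<in> W" unfolding p_def sp[symmetric]
    by (intro span_sum span_mul span_base)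
  have orthB: "(x - p) \<bullet> b = 0" if b: "b \<in> B" for b
  proof -
    have s0: "(\<Sum>e\<in>B-{b}. (x \<bullet> e / (e \<bullet> e)) * (e \<bullet> b)) = 0"
      using po b by (intro sum.neutral) (auto simp: pairwise_def orthogonal_def)
    have "p \<bullet> b = (\<Sum>e\<in>B. (x \<bullet> e / (e \<bullet> e)) * (e \<bullet> b))"
      unfolding p_def by (simp add: inner_sum_left)
    also have "\<dots> = (x \<bullet> b / (b \<bullet> b)) * (b \<bullet> b) + (\<Sum>e\<in>B-{b}. (x \<bullet> e / (e \<bullet> e)) * (e \<bullet> b))"
      by (rule sum.remove[OF fin b])
    also have "\<dots> = x \<bullet> b" using z b s0 by simp
    finally show ?thesis by (simp add: inner_diff_left)
  qed
  have orthW: "(x - p) \<bullet> w = 0" if "w \<in> W" for w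
    using orthogonal_to_span[of w B "x - p"] orthB that sp by (auto simp: orthogonal_def)
  have uniq: "q = p" if "q \<in> W" "\<forall>w\<in>W. (x - q) \<bullet> w = 0" for q
  proof -
    have d: "p - q \<in> W" using that(1) pW sp by (metis span_diff)
    have "(x - q) \<bullet> (p - q) - (x - p) \<bullet> (p - q) = 0" using that(2) orthW d by simp
    moreover have "(x - q) \<bullet> (p - q) - (x - p) \<bullet> (p - q) = ((x - q) - (x - p)) \<bullet> (p - q)"
      by (simp only: inner_diff_left)
    moreover have "(x - q) - (x - p) = p - q" by simp
    ultimately have "(p - q) \<bullet> (p - q) = 0" by simp
    then show ?thesis by simp
  qed
  have "orth_proj W x = p" unfolding orth_proj_def
  proof (rule the_equality)
    show "p \<in> W \<and> (\<forall>w\<in>W. (x - p) \<bullet> w = 0)" using pW orthW by blast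
    fix q assume "q \<in> W \<and> (\<forall>w\<in>W. (x - q) \<bullet> w = 0)"
    then show "q = p" using uniq by blast
  qed
  then show ?thesis using pW orthW by (simp add: p_def)
qed

lemma proj_add:
  fixes W :: "'a::euclidean_space set"
  assumes fin: "finite B" and z: "0 \<notin> B" and po: "pairwise orthogonal B" and sp: "span B = W"
  shows "orth_proj W (x + y) = orth_proj W x + orth_proj W y"
    "orth_proj W (x - y) = orth_proj W x - orth_proj W y"
  using proj_formula[OF assms, of "x+y"] proj_formula[OF assms, of "x-y"]
    proj_formula[OF assms, of x] proj_formula[OF assms, of y]
  by (simp_all add: inner_add_left inner_diff_left add_divide_distrib diff_divide_distrib
      scaleR_add_left scaleR_diff_left sum.distrib sum_subtractf)

theorem mainTheorem9:
  fixes W :: "nat \<Rightarrow> (real ^ 'n) set" and M :: nat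
  assumes subsp: "\<forall>i\<in>{1..M}. subspace (W i)"
    and pr: "does_phase_retrieval M W"
    and dimsum: "(\<Sum>i=1..M. dim (W i)) = 2 * CARD('n) - 1"
  shows "\<forall>i\<in>{1..M}. \<forall>j\<in>{1..M}. i \<noteq> j \<longrightarrow> W i \<inter> W j = {0}"
proof (intro ballI impI)
  fix i j assume i: "i \<in> {1..M}" and j: "j \<in> {1..M}" and ij: "i \<noteq> j"
  show "W i \<inter> W j = {0}"
  proof (rule ccontr)
    assume ne: "W i \<inter> W j \<noteq> {0}"
    have "0 \<in> W i \<inter> W j" using subsp i j by (simp add: subspace_0)
    then obtain w where w: "w \<in> W i" "w \<in> W j" "w \<noteq> 0" using ne by blast
    have "\<forall>k\<in>{1..M}. \<exists>B. finite B \<and> 0 \<notin> B \<and> pairwise orthogonal B \<and> span B = W k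
       \<and> card B = dim (W k) \<and> (w \<in> W k \<longrightarrow> w \<in> B)"
    proof
      fix k assume k: "k \<in> {1..M}"
      show "\<exists>B. finite B \<and> 0 \<notin> B \<and> pairwise orthogonal B \<and> span B = W k
       \<and> card B = dim (W k) \<and> (w \<in> W k \<longrightarrow> w \<in> B)"
      proof (cases "w \<in> W k")
        case True then show ?thesis using obasis[of "W k" w] subsp k w(3) by auto
      next
        case False then show ?thesis using obasis2[of "W k"] subsp k by auto
      qed
    qed
    then obtain B where B0: "\<forall>k\<in>{1..M}. finite (B k) \<and> 0 \<notin> B k \<and> pairwise orthogonal (B k)
       \<and> span (B k) = W k \<and> card (B k) = dim (W k) \<and> (w \<in> W k \<longrightarrow> w \<in> B k)"
      by (rule bchoice[THEN exE])
    have B: "\<And>k. k \<in> {1..M} \<Longrightarrow> finite (B k) \<and> 0 \<notin> B k \<and> pairwise orthogonal (B k)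
       \<and> span (B k) = W k \<and> card (B k) = dim (W k) \<and> (w \<in> W k \<longrightarrow> w \<in> B k)"
      using B0 by (rule bspec)
    define N where "N = CARD('n)"
    define E where "E = Sigma {1..M} B"
    have finE: "finite E" unfolding E_def using B by (intro finite_SigmaI) auto
    have "card E = (\<Sum>k\<in>{1..M}. card (B k))" unfolding E_def
      by (rule card_SigmaI) (use B in auto)
    also have "\<dots> = (\<Sum>k=1..M. dim (W k))" by (rule sum.cong) (use B in auto)
    finally have cardE: "card E = 2 * N - 1" using dimsum by (simp add: N_def)
    have iwE: "(i, w) \<in> E" and jwE: "(j, w) \<in> E" unfolding E_def using B i j w by auto
    have "card {(i, w), (j, w)} \<le> card E" using iwE jwE finE by (intro card_mono) auto
    then have N2: "N \<ge> 2" using ij cardE by auto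
    have "card (E - {(i, w), (j, w)}) = 2 * N - 3" using iwE jwE finE cardE ij
      by (simp add: card_Diff_subset)
    then have "N - 2 \<le> card (E - {(i, w), (j, w)})" using N2 by simp
    then obtain S0 where S0: "S0 \<subseteq> E - {(i, w), (j, w)}" "card S0 = N - 2" "finite S0"
      by (rule obtain_subset_with_card_n)
    define S where "S = insert (i, w) (insert (j, w) S0)"
    have SE: "S \<subseteq> E" using S0 iwE jwE unfolding S_def by auto
    have n1: "(j, w) \<notin> S0" "(i, w) \<notin> insert (j, w) S0" using S0(1) ij by auto
    have "card S = Suc (Suc (N - 2))" unfolding S_def
      using card_insert_disjoint[OF _ n1(2)] card_insert_disjoint[OF S0(3) n1(1)] S0 by simp
    then have cardS: "card S = N" using N2 by simp
    define T where "T = E - S"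
    have finS: "finite S" using SE finE finite_subset by blast
    have cardT: "card T = N - 1" unfolding T_def using card_Diff_subset[OF finS SE] cardE cardS N2
      by simp
    have "snd ` S = snd ` (insert (j, w) S0)" unfolding S_def by auto
    moreover have "card (insert (j, w) S0) = N - 1"
      using card_insert_disjoint[OF S0(3) n1(1)] S0(2) N2 by simp
    ultimately have "card (snd ` S) \<le> N - 1" using card_image_le[of "insert (j, w) S0" snd] S0(3)
      by simp
    moreover have "dim (snd ` S) \<le> card (snd ` S)"
      by (rule dim_le_card[OF span_superset finite_imageI[OF finS]])
    ultimately have "dim (snd ` S) < DIM(real ^ 'n)" using N2 by (simp add: N_def)
    then obtain u where u: "u \<noteq> 0" "\<And>y. y \<in> span (snd ` S) \<Longrightarrow> orthogonal u y"
      using orthogonal_to_subspace_exists by blast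
    have finT: "finite T" using finE T_def by simp
    have "card (snd ` T) \<le> N - 1" using card_image_le[OF finT, of snd] cardT by simp
    moreover have "dim (snd ` T) \<le> card (snd ` T)"
      by (rule dim_le_card[OF span_superset finite_imageI[OF finT]])
    ultimately have "dim (snd ` T) < DIM(real ^ 'n)" using N2 by (simp add: N_def)
    then obtain v where v: "v \<noteq> 0" "\<And>y. y \<in> span (snd ` T) \<Longrightarrow> orthogonal v y"
      using orthogonal_to_subspace_exists by blast
    have key: "norm (orth_proj (W k) (u + v)) = norm (orth_proj (W k) (u - v))"
      if k: "k \<in> {1..M}" for k
    proof -
      have Bk: "finite (B k)" "0 \<notin> B k" "pairwise orthogonal (B k)" "span (B k) = W k"
        using B[OF k] by auto
      note pf = proj_formula[OF Bk]
      have "orth_proj (W k) u \<bullet> v = (\<Sum>e\<in>B k. (u \<bullet> e / (e \<bullet> e)) * (e \<bullet> v))"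
        using pf[of u] by (simp add: inner_sum_left)
      also have "\<dots> = 0"
      proof (rule sum.neutral, rule ballI)
        fix e assume e: "e \<in> B k"
        then have "(k, e) \<in> E" unfolding E_def using k by auto
        then have "(k, e) \<in> S \<or> (k, e) \<in> T" unfolding T_def by auto
        then have "u \<bullet> e = 0 \<or> e \<bullet> v = 0"
        proof
          assume "(k, e) \<in> S"
          then have "e \<in> span (snd ` S)" by (intro span_base) force
          then show ?thesis using u(2) by (simp add: orthogonal_def)
        next
          assume "(k, e) \<in> T"
          then have "e \<in> span (snd ` T)" by (intro span_base) force
          then show ?thesis using v(2) by (simp add: orthogonal_def inner_commute)
        qed
        then show "u \<bullet> e / (e \<bullet> e) * (e \<bullet> v) = 0" by auto
      qed
      finally have uv: "orth_proj (W k) u \<bullet> v = 0" .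
      define a where "a = orth_proj (W k) u"
      define b where "b = orth_proj (W k) v"
      have aW: "a \<in> W k" unfolding a_def by (rule conjunct1[OF conjunct2[OF pf[of u]]])
      have h0: "(v - b) \<bullet> a = 0" unfolding b_def
        by (rule bspec[OF conjunct2[OF conjunct2[OF pf[of v]]] aW])
      have h1: "(v - b) \<bullet> a = v \<bullet> a - b \<bullet> a" by (rule inner_diff_left)
      have c1: "v \<bullet> a = a \<bullet> v" by (rule inner_commute)
      have c2: "b \<bullet> a = a \<bullet> b" by (rule inner_commute)
      have h2: "v \<bullet> a - b \<bullet> a = 0" using h0 unfolding h1 .
      have uv2: "a \<bullet> v = 0" using uv unfolding a_def .
      have ab: "a \<bullet> b = 0" using h2 uv2 c1 c2 by linarith
      have e1: "(a + b) \<bullet> (a + b) = (a \<bullet> a + a \<bullet> b) + (b \<bullet> a + b \<bullet> b)"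
        by (simp only: inner_add_left inner_add_right)
      have e2: "(a - b) \<bullet> (a - b) = (a \<bullet> a - a \<bullet> b) - (b \<bullet> a - b \<bullet> b)"
        by (simp only: inner_diff_left inner_diff_right)
      have "(a + b) \<bullet> (a + b) = (a - b) \<bullet> (a - b)" using e1 e2 ab c2 by linarith
      then have nab: "norm (a + b) = norm (a - b)" unfolding norm_eq_sqrt_inner by (rule arg_cong[where f=sqrt])
      have pa: "orth_proj (W k) (u + v) = a + b" using proj_add(1)[OF Bk, of u v] unfolding a_def b_def .
      have pb: "orth_proj (W k) (u - v) = a - b" using proj_add(2)[OF Bk, of u v] unfolding a_def b_def .
      show ?thesis unfolding pa pb by (rule nab)
    qed
    have allk: "\<forall>k\<in>{1..M}. norm (orth_proj (W k) (u + v)) = norm (orth_proj (W k) (u - v))"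
      using key by blast
    have pr': "\<And>x y. (\<forall>i\<in>{1..M}. norm (orth_proj (W i) x) = norm (orth_proj (W i) y)) \<Longrightarrow> x = y \<or> x = - y"
      using pr unfolding does_phase_retrieval_def by blast
    have "u + v = u - v \<or> u + v = - (u - v)" by (rule pr'[OF allk])
    then show False
    proof
      assume h: "u + v = u - v"
      have "2 *\<^sub>R v = (u + v) - (u - v)" by (simp add: scaleR_2)
      then have "2 *\<^sub>R v = 0" using h by simp
      then show False using v(1) by simp
    next
      assume h: "u + v = - (u - v)"
      have "2 *\<^sub>R u = (u + v) + (u - v)" by (simp add: scaleR_2)
      then have "2 *\<^sub>R u = 0" using h by simp
      then show False using u(1) by simp
    qed
  qed
qed

end
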